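(* Let $R$ be a discrete $\Gamma$-ring and $w\in R[2]$ a formal sum law in $R$. For every $k\ge1$ and every pointed map $f:[2^k]\to[2^{k-1}]$ such that $f(1_{2^k})=1_{2^{k-1}}$ in $H\mathbb{N}[2^{k-1}]$ (i.e. $f$ maps exactly $2^{k-1}$ elements of $\{1,\dots,2^k\}$ bijectively onto $\{1,\dots,2^{k-1}\}$ and the rest to $0$), one has $f(w^k)=w^{k-1}$ in $R[2^{k-1}]$.
   Context: Let $[n]=\{0,1,\dots,n\}$, pointed at $0$. A $\Gamma$-space is a functor $F$ from finite pointed sets $[n]$ and pointed maps to pointed simplicial sets with $F[0]$ a point; for a pointed map $f$ we write $f$ also for $F(f)$. $\Sigma_n$ acts on $F[n]$ via permutations of $\{1,\dots,n\}$. We identify $[n]\wedge[m]$ with $[nm]$ via $i\wedge j\mapsto (j-1)n+i$. A $\Gamma$-ring is a $\Gamma$-space $R$ with unit $1\in R[1]$ and an associative unital multiplication given by natural maps $R(K)\wedge R(L)\to R(K\wedge L)$, $p\wedge q\mapsto pq$; it is discrete if all $R(K)$ are sets. For $w\in R[2]$, $w^k\in R[2^k]$ is the $k$-fold product. $p^n_i:[n]\to[n-1]$ is given by $p^n_i(j)=j$ for $j<i$, $p^n_i(i)=0$, $p^n_i(j)=j-1$ for $j>i$. $H\mathbb{N}[k]=\mathbb{N}^k$ (reduced free commutative monoid on $[k]$, pointed maps act by summing coefficients along fibres), and $1_n=(1,\dots,1)\in H\mathbb{N}[n]$. A formal sum law in $R$ is $w\in R[2]$ with $p^2_1(w)=p^2_2(w)=1$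 and with $w^k$ fixed by $\Sigma_{2^k}$ for all $k\ge1$. *)

theory Defs
  imports "HOL-Combinatorics.Permutations"
begin

text \<open>Finite pointed sets are [n] = {0,...,n} with basepoint 0; a pointed map
  [m] -> [n] is represented by a function nat => nat, only its values on {0..m} matter.\<close>

definition pmap :: "nat \<Rightarrow> nat \<Rightarrow> (nat \<Rightarrow> nat) \<Rightarrow> bool" where
  "pmap m n f \<longleftrightarrow> f 0 = 0 \<and> (\<forall>i\<le>m. f i \<le> n)"

text \<open>The map f smash g : [m]^[n] -> [m']^[n'] under the identification
  [m]^[n] = [mn], i^j |-> (j-1)m + i.\<close>

definition smash_map :: "nat \<Rightarrow> nat \<Rightarrow> (nat \<Rightarrow> nat) \<Rightarrow> (nat \<Rightarrow> nat) \<Rightarrow> nat \<Rightarrow> nat" where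
  "smash_map m m' f g k =
     (if k = 0 then 0 else
      (let i = (k - 1) mod m + 1; j = (k - 1) div m + 1 in
       if f i = 0 \<or> g j = 0 then 0 else (g j - 1) * m' + f i))"

text \<open>A discrete Gamma-ring: X n is the pointed set R[n] with basepoint bp n,
  act m n f is R(f) : R[m] -> R[n], mul m n is R[m] ^ R[n] -> R[mn], one is the unit.\<close>

definition discrete_gamma_ring ::
  "(nat \<Rightarrow> 'a set) \<Rightarrow> (nat \<Rightarrow> 'a) \<Rightarrow> (nat \<Rightarrow> nat \<Rightarrow> (nat \<Rightarrow> nat) \<Rightarrow> 'a \<Rightarrow> 'a)
    \<Rightarrow> (nat \<Rightarrow> nat \<Rightarrow> 'a \<Rightarrow> 'a \<Rightarrow> 'a) \<Rightarrow> 'a \<Rightarrow> bool" where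
  "discrete_gamma_ring X bp act mul one \<longleftrightarrow>
     (\<forall>n. bp n \<in> X n) \<and> X 0 = {bp 0} \<and>
     (\<forall>m n f x. pmap m n f \<and> x \<in> X m \<longrightarrow> act m n f x \<in> X n) \<and>
     (\<forall>m n f. pmap m n f \<longrightarrow> act m n f (bp m) = bp n) \<and>
     (\<forall>m n f g x. pmap m n f \<and> (\<forall>i\<le>m. f i = g i) \<and> x \<in> X m
        \<longrightarrow> act m n f x = act m n g x) \<and>
     (\<forall>n x. x \<in> X n \<longrightarrow> act n n id x = x) \<and>
     (\<forall>l m n f g x. pmap l m f \<and> pmap m n g \<and> x \<in> X l
        \<longrightarrow> act m n g (act l m f x) = act l n (g \<circ> f) x) \<and>
     (\<forall>m n p q. p \<in> X m \<and> q \<in> X n \<longrightarrow> mul m n p q \<in> X (m * n)) \<and>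
     (\<forall>m n q. q \<in> X n \<longrightarrow> mul m n (bp m) q = bp (m * n)) \<and>
     (\<forall>m n p. p \<in> X m \<longrightarrow> mul m n p (bp n) = bp (m * n)) \<and>
     (\<forall>m m' n n' f g p q. pmap m m' f \<and> pmap n n' g \<and> p \<in> X m \<and> q \<in> X n \<longrightarrow>
        mul m' n' (act m m' f p) (act n n' g q)
          = act (m * n) (m' * n') (smash_map m m' f g) (mul m n p q)) \<and>
     one \<in> X 1 \<and>
     (\<forall>n q. q \<in> X n \<longrightarrow> mul 1 n one q = q) \<and>
     (\<forall>n p. p \<in> X n \<longrightarrow> mul n 1 p one = p) \<and>
     (\<forall>l m n p q r. p \<in> X l \<and> q \<in> X m \<and> r \<in> X n \<longrightarrow>
        mul (l * m) n (mul l m p q) r = mul l (m * n) p (mul m n q r))"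

fun wpow :: "(nat \<Rightarrow> nat \<Rightarrow> 'a \<Rightarrow> 'a \<Rightarrow> 'a) \<Rightarrow> 'a \<Rightarrow> 'a \<Rightarrow> nat \<Rightarrow> 'a" where
  "wpow mul one w 0 = one"
| "wpow mul one w (Suc k) = mul (2 ^ k) 2 (wpow mul one w k) w"

definition proj :: "nat \<Rightarrow> nat \<Rightarrow> nat \<Rightarrow> nat" where
  "proj n i j = (if j < i then j else if j = i then 0 else j - 1)"

definition formal_sum_law ::
  "(nat \<Rightarrow> 'a set) \<Rightarrow> (nat \<Rightarrow> nat \<Rightarrow> (nat \<Rightarrow> nat) \<Rightarrow> 'a \<Rightarrow> 'a)
    \<Rightarrow> (nat \<Rightarrow> nat \<Rightarrow> 'a \<Rightarrow> 'a \<Rightarrow> 'a) \<Rightarrow> 'a \<Rightarrow> 'a \<Rightarrow> bool" where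
  "formal_sum_law X act mul one w \<longleftrightarrow>
     w \<in> X 2 \<and> act 2 1 (proj 2 1) w = one \<and> act 2 1 (proj 2 2) w = one \<and>
     (\<forall>k\<ge>1. \<forall>\<sigma>. \<sigma> permutes {1..2 ^ k} \<longrightarrow>
        act (2 ^ k) (2 ^ k) \<sigma> (wpow mul one w k) = wpow mul one w k)"

text \<open>HN: HN[n] = N^n, elements represented as functions on {1..n} (zero elsewhere);
  a pointed map acts by summing coefficients along fibres.\<close>

definition hn_map :: "nat \<Rightarrow> nat \<Rightarrow> (nat \<Rightarrow> nat) \<Rightarrow> (nat \<Rightarrow> nat) \<Rightarrow> nat \<Rightarrow> nat" where
  "hn_map m n f v j = (if 1 \<le> j \<and> j \<le> n then (\<Sum>i\<in>{i\<in>{1..m}. f i = j}. v i) else 0)"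

definition hn_ones :: "nat \<Rightarrow> nat \<Rightarrow> nat" where
  "hn_ones n j = (if 1 \<le> j \<and> j \<le> n then 1 else 0)"

end

theory Submission imports Defs begin

lemma comb:
  fixes N :: nat and f :: "nat \<Rightarrow> nat"
  assumes pm: "pmap (N*2) N f"
    and hn: "hn_map (N*2) N f (hn_ones (N*2)) = hn_ones N"
  shows "\<exists>\<sigma>. \<sigma> permutes {1..N*2} \<and> (\<forall>i\<le>N*2. f i = (if \<sigma> i \<le> N then \<sigma> i else 0))"
proof -
  define A where "A = {i\<in>{1..N*2}. f i \<noteq> 0}"
  define B where "B = {1..N*2} - A"
  have one: "card {i\<in>{1..N*2}. f i = j} = 1" if j: "1 \<le> j" "j \<le> N" for j
  proof -
    have "hn_map (N*2) N f (hn_ones (N*2)) j = 1" using hn j by (simp add: hn_ones_def)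
    moreover have "hn_map (N*2) N f (hn_ones (N*2)) j = (\<Sum>i\<in>{i\<in>{1..N*2}. f i = j}. 1)"
      using j unfolding hn_map_def by (simp add: hn_ones_def)
    ultimately show ?thesis by simp
  qed
  have fA: "f i \<in> {1..N}" if "i \<in> A" for i
    using that pm unfolding A_def pmap_def by auto
  have bijA: "bij_betw f A {1..N}"
    unfolding bij_betw_def
  proof
    show "inj_on f A"
    proof (rule inj_onI)
      fix x y assume x: "x \<in> A" and y: "y \<in> A" and e: "f x = f y"
      have "card {i\<in>{1..N*2}. f i = f x} = 1" using fA[OF x] by (intro one) auto
      then obtain z where "{i\<in>{1..N*2}. f i = f x} = {z}" by (meson card_1_singletonE)
      moreover have "x \<in> {i\<in>{1..N*2}. f i = f x}" "y \<in> {i\<in>{1..N*2}. f i = f x}"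
        using x y e unfolding A_def by auto
      ultimately show "x = y" by auto
    qed
    show "f ` A = {1..N}"
    proof
      show "f ` A \<subseteq> {1..N}" using fA by auto
      show "{1..N} \<subseteq> f ` A"
      proof
        fix j assume j: "j \<in> {1..N}"
        have "card {i\<in>{1..N*2}. f i = j} = 1" using j by (intro one) auto
        then obtain z where "{i\<in>{1..N*2}. f i = j} = {z}" by (meson card_1_singletonE)
        then have "z \<in> A" "f z = j" using j unfolding A_def by auto
        then show "j \<in> f ` A" by auto
      qed
    qed
  qed
  have cA: "card A = N" using bij_betw_same_card[OF bijA] by simp
  have AS: "A \<subseteq> {1..N*2}" unfolding A_def by auto
  have cB: "card B = card {N+1..N*2}"
    unfolding B_def using cA AS by (simp add: card_Diff_subset finite_subset)
  obtain h where h: "bij_betw h B {N+1..N*2}"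
    using finite_same_card_bij[OF _ _ cB] unfolding B_def by auto
  define \<sigma> where "\<sigma> i = (if i \<in> A then f i else if i \<in> B then h i else i)" for i
  have b1: "bij_betw \<sigma> A {1..N}" using bijA by (rule bij_betw_cong[THEN iffD1, rotated]) (simp add: \<sigma>_def)
  have b2: "bij_betw \<sigma> B {N+1..N*2}" using h
    by (rule bij_betw_cong[THEN iffD1, rotated]) (auto simp: \<sigma>_def B_def)
  have "bij_betw \<sigma> (A \<union> B) ({1..N} \<union> {N+1..N*2})"
    by (rule bij_betw_combine[OF b1 b2]) auto
  moreover have "A \<union> B = {1..N*2}" using AS B_def by auto
  moreover have "{1..N} \<union> {N+1..N*2} = {1..N*2}" by auto
  ultimately have bs: "bij_betw \<sigma> {1..N*2} {1..N*2}" by simp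
  have perm: "\<sigma> permutes {1..N*2}"
    by (rule bij_imp_permutes[OF bs]) (auto simp: \<sigma>_def B_def A_def)
  have "\<forall>i\<le>N*2. f i = (if \<sigma> i \<le> N then \<sigma> i else 0)"
  proof (intro allI impI)
    fix i assume i: "i \<le> N*2"
    show "f i = (if \<sigma> i \<le> N then \<sigma> i else 0)"
    proof (cases "i = 0")
      case True then show ?thesis using pm by (simp add: pmap_def \<sigma>_def A_def B_def)
    next
      case False
      then have iS: "i \<in> {1..N*2}" using i by auto
      show ?thesis
      proof (cases "i \<in> A")
        case True then show ?thesis using fA[OF True] by (simp add: \<sigma>_def)
      next
        case nA: False
        then have "i \<in> B" using iS B_def by auto
        then have "h i \<in> {N+1..N*2}" using h by (auto simp: bij_betw_def)
        moreover have "f i = 0" using nA iS A_def by auto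
        ultimately show ?thesis using nA \<open>i \<in> B\<close> by (simp add: \<sigma>_def)
      qed
    qed
  qed
  with perm show ?thesis by blast
qed

theorem lemma2p2p1:
  fixes X :: "nat \<Rightarrow> 'a set" and bp :: "nat \<Rightarrow> 'a"
    and act :: "nat \<Rightarrow> nat \<Rightarrow> (nat \<Rightarrow> nat) \<Rightarrow> 'a \<Rightarrow> 'a"
    and mul :: "nat \<Rightarrow> nat \<Rightarrow> 'a \<Rightarrow> 'a \<Rightarrow> 'a" and one w :: 'a
    and k :: nat and f :: "nat \<Rightarrow> nat"
  assumes "discrete_gamma_ring X bp act mul one"
    and "formal_sum_law X act mul one w"
    and "k \<ge> 1"
    and "pmap (2 ^ k) (2 ^ (k - 1)) f"
    and "hn_map (2 ^ k) (2 ^ (k - 1)) f (hn_ones (2 ^ k)) = hn_ones (2 ^ (k - 1))"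
  shows "act (2 ^ k) (2 ^ (k - 1)) f (wpow mul one w k) = wpow mul one w (k - 1)"
proof -
  note R = assms(1)[unfolded discrete_gamma_ring_def]
  note F = assms(2)[unfolded formal_sum_law_def]
  have oneX: "one \<in> X 1" using R by meson
  have mulX: "\<And>m n p q. p \<in> X m \<Longrightarrow> q \<in> X n \<Longrightarrow> mul m n p q \<in> X (m*n)" using R by meson
  have cong: "\<And>m n f g x. pmap m n f \<Longrightarrow> (\<forall>i\<le>m. f i = g i) \<Longrightarrow> x \<in> X m \<Longrightarrow> act m n f x = act m n g x" using R by meson
  have comp: "\<And>l m n f g x. pmap l m f \<Longrightarrow> pmap m n g \<Longrightarrow> x \<in> X l \<Longrightarrow> act m n g (act l m f x) = act l n (g \<circ> f) x" using R by meson
  have idact: "\<And>n x. x \<in> X n \<Longrightarrow> act n n id x = x" using R by meson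
  have nat: "\<And>m m' n n' f g p q. pmap m m' f \<Longrightarrow> pmap n n' g \<Longrightarrow> p \<in> X m \<Longrightarrow> q \<in> X n \<Longrightarrow>
        mul m' n' (act m m' f p) (act n n' g q) = act (m * n) (m' * n') (smash_map m m' f g) (mul m n p q)" using R by meson
  have runit: "\<And>n p. p \<in> X n \<Longrightarrow> mul n 1 p one = p" using R by meson
  have wX2: "w \<in> X 2" and p22: "act 2 1 (proj 2 2) w = one" using F by meson+
  have Fp: "\<And>k \<sigma>. k \<ge> 1 \<Longrightarrow> \<sigma> permutes {1..2 ^ k} \<Longrightarrow> act (2 ^ k) (2 ^ k) \<sigma> (wpow mul one w k) = wpow mul one w k" using F by meson
  obtain m where k: "k = Suc m" using assms(3) by (cases k) auto
  define N :: nat where "N = 2 ^ m"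
  have k2: "2 ^ k = N * 2" by (simp add: k N_def)
  have km: "2 ^ (k - 1) = N" by (simp add: k N_def)
  have wX: "wpow mul one w n \<in> X (2 ^ n)" for n
  proof (induction n)
    case 0 then show ?case using oneX by simp
  next
    case (Suc n)
    have "mul (2^n) 2 (wpow mul one w n) w \<in> X (2^n * 2)" using mulX[OF Suc wX2] .
    then show ?case by (simp add: mult.commute)
  qed
  have wm: "wpow mul one w m \<in> X N" using wX N_def by simp
  have wk: "wpow mul one w k = mul N 2 (wpow mul one w m) w" by (simp add: k N_def)
  have wkX: "wpow mul one w k \<in> X (N*2)" using wX[of k] k2 by simp
  have pm: "pmap (N*2) N f" using assms(4) k2 km by simp
  have hn: "hn_map (N*2) N f (hn_ones (N*2)) = hn_ones N" using assms(5) k2 km by simp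
  obtain \<sigma> where sp: "\<sigma> permutes {1..N*2}" and fs: "\<forall>i\<le>N*2. f i = (if \<sigma> i \<le> N then \<sigma> i else 0)"
    using comb[OF pm hn] by blast
  define g where "g i = (if i \<le> N then i else 0)" for i :: nat
  have Npos: "N > 0" by (simp add: N_def)
  have permk: "act (N*2) (N*2) \<sigma> (wpow mul one w k) = wpow mul one w k"
    using Fp[OF assms(3)] sp k2 by metis
  have psig: "pmap (N*2) (N*2) \<sigma>"
    unfolding pmap_def using sp
    by (metis atLeastAtMost_iff not_one_le_zero permutes_in_image permutes_not_in)
  have pg: "pmap (N*2) N g" by (simp add: pmap_def g_def)
  have ps2: "pmap 2 1 (proj 2 2)" by (simp add: pmap_def proj_def)
  have pid: "pmap N N id" by (simp add: pmap_def)
  have "act (N*2) N f (wpow mul one w k) = act (N*2) N (g \<circ> \<sigma>) (wpow mul one w k)"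
  proof -
    have "\<forall>i\<le>N*2. f i = (g \<circ> \<sigma>) i" using fs by (simp add: g_def)
    then show ?thesis using cong[OF pm _ wkX] by blast
  qed
  also have "\<dots> = act (N*2) N g (act (N*2) (N*2) \<sigma> (wpow mul one w k))"
    using comp[OF psig pg wkX] by simp
  also have "\<dots> = act (N*2) N g (wpow mul one w k)" using permk by simp
  also have "\<dots> = act (N*2) N (smash_map N N id (proj 2 2)) (mul N 2 (wpow mul one w m) w)"
  proof -
    have "\<forall>i\<le>N*2. g i = smash_map N N id (proj 2 2) i"
    proof (intro allI impI)
      fix i assume i: "i \<le> N*2"
      show "g i = smash_map N N id (proj 2 2) i"
      proof (cases "i = 0")
        case True then show ?thesis by (simp add: g_def smash_map_def)
      next
        case False
        show ?thesis
        proof (cases "i \<le> N")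
          case True
          then have "(i-1) div N = 0" "(i-1) mod N = i - 1" using False by auto
          then show ?thesis using True False by (simp add: g_def smash_map_def proj_def Let_def)
        next
          case nle: False
          have e1: "i - 1 = (i-1-N) + N" and e2: "i-1-N < N" using nle i by auto
          have "(i-1) div N = (i-1-N) div N + 1" using Npos by (subst e1) (simp only: div_add_self2)
          also have "\<dots> = 1" using e2 by simp
          finally have "(i-1) div N = 1" .
          then show ?thesis using nle False by (simp add: g_def smash_map_def proj_def Let_def)
        qed
      qed
    qed
    then show ?thesis using cong[OF pg _ wkX] wk by metis
  qed
  also have "\<dots> = mul N 1 (act N N id (wpow mul one w m)) (act 2 1 (proj 2 2) w)"
    using nat[OF pid ps2 wm wX2] by simp
  also have "\<dots> = wpow mul one w m" using idact[OF wm] p22 runit[OF wm] by simp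
  finally show ?thesis unfolding k2 km using k by simp
qed

end
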